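(* Let $\hat u_0:\mathbb{R}^n\to\mathbb{R}^m$ be such that its graph $M_0\subset\mathbb{R}^{n,m}$ is spacelike and $0\in M_0$. Then $$\lim_{R\to\infty}\inf_{x\in\mathbb{R}^n\setminus B_R}\big[|x|^2-\|\hat u_0(x)\|^2\big]=\infty,$$ equivalently $\lim_{R\to\infty}\inf_{M_0\setminus\mathcal{C}_R}|X|^2=\infty$. Moreover, there exists $\epsilon>0$ such that $\|\hat u_0\|\le\chi_\epsilon$, where $\chi_\epsilon(x)=1-\epsilon$ for $x\in\overline{B_1(0)}$ and $\chi_\epsilon(x)=|x|-\epsilon$ for $x\in\mathbb{R}^n\setminus B_1(0)$.
   Context: $\mathbb{R}^{n,m}=\mathbb{R}^n\times\mathbb{R}^m$ with quadratic form $|(x,y)|^2=|x|^2-\|y\|^2$ ($|x|,\|y\|$ Euclidean norms). The graph is spacelike if $\delta_{ij}-\sum_AD_i\hat u_0^AD_j\hat u_0^A$ is positive definite. $X$ is the position vector of $M_0$, $B_R\subset\mathbb{R}^n$ the Euclidean ball, and $\mathcal{C}_R=\{(x,y)\in\mathbb{R}^{n,m}:|x|^2<R^2\}$ the solid cylinder. *)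

theory Defs
  imports "HOL-Analysis.Analysis"
begin

definition graph_metric ::
  "(real^'n \<Rightarrow> real^'m) \<Rightarrow> real^'n \<Rightarrow> 'n \<Rightarrow> 'n \<Rightarrow> real" where
  "graph_metric u x i j =
     (if i = j then 1 else 0)
     - (\<Sum>A\<in>UNIV. (frechet_derivative u (at x) (axis i 1)) $ A
                    * (frechet_derivative u (at x) (axis j 1)) $ A)"

definition spacelike_graph :: "(real^'n \<Rightarrow> real^'m) \<Rightarrow> bool" where
  "spacelike_graph u \<longleftrightarrow>
     (\<forall>x. u differentiable (at x)) \<and>
     (\<forall>x. \<forall>v::real^'n. v \<noteq> 0 \<longrightarrow>
        (\<Sum>i\<in>UNIV. \<Sum>j\<in>UNIV. v $ i * graph_metric u x i j * v $ j) > 0)"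

definition lorentz_sq :: "(real^'n) \<times> (real^'m) \<Rightarrow> real" where
  "lorentz_sq p = norm (fst p) ^ 2 - norm (snd p) ^ 2"

definition graph_of :: "(real^'n \<Rightarrow> real^'m) \<Rightarrow> ((real^'n) \<times> (real^'m)) set" where
  "graph_of u = {(x, u x) | x. True}"

definition cylinder :: "real \<Rightarrow> ((real^'n) \<times> (real^'m)) set" where
  "cylinder R = {p. norm (fst p) ^ 2 < R ^ 2}"

definition chi :: "real \<Rightarrow> real^'n \<Rightarrow> real" where
  "chi \<epsilon> x = (if norm x \<le> 1 then 1 - \<epsilon> else norm x - \<epsilon>)"

end

theory Submission
  imports Defs
begin

lemma quad_form:
  fixes D :: "real^'n \<Rightarrow> real^'m"
  assumes "linear D"
  shows "(\<Sum>i\<in>UNIV. \<Sum>j\<in>UNIV. v $ i * ((if i = j then 1 else 0)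
     - (\<Sum>A\<in>UNIV. (D (axis i 1)) $ A * (D (axis j 1)) $ A)) * v $ j)
   = norm v ^ 2 - norm (D v) ^ 2"
proof -
  have Dv: "D v = (\<Sum>i\<in>UNIV. v $ i *\<^sub>R D (axis i 1))"
  proof -
    have "v = (\<Sum>i\<in>UNIV. v $ i *\<^sub>R axis i 1)"
      using basis_expansion[of v] by (simp add: scalar_mult_eq_scaleR)
    then have "D v = D (\<Sum>i\<in>UNIV. v $ i *\<^sub>R axis i 1)" by simp
    also have "\<dots> = (\<Sum>i\<in>UNIV. v $ i *\<^sub>R D (axis i 1))"
      using assms by (simp add: linear_sum linear_cmul)
    finally show ?thesis .
  qed
  have n1: "norm v ^ 2 = (\<Sum>i\<in>UNIV. v $ i * v $ i)"
    by (simp add: norm_vec_def L2_set_def power2_eq_square real_norm_def sum_nonneg)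
  have n2: "norm (D v) ^ 2 = (\<Sum>A\<in>UNIV. (D v $ A) * (D v $ A))"
    by (simp add: norm_vec_def L2_set_def power2_eq_square real_norm_def sum_nonneg)
  have "(\<Sum>i\<in>UNIV. \<Sum>j\<in>UNIV. v $ i * ((if i = j then 1 else 0)
     - (\<Sum>A\<in>UNIV. (D (axis i 1)) $ A * (D (axis j 1)) $ A)) * v $ j)
    = (\<Sum>i\<in>UNIV. \<Sum>j\<in>UNIV. v $ i * (if i = j then 1 else 0) * v $ j)
      - (\<Sum>i\<in>UNIV. \<Sum>j\<in>UNIV. \<Sum>A\<in>UNIV. v $ i * (D (axis i 1)) $ A * ((D (axis j 1)) $ A * v $ j))"
    by (simp add: right_diff_distrib left_diff_distrib sum_subtractf sum_distrib_left sum_distrib_right mult.assoc)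
  also have "(\<Sum>i\<in>UNIV. \<Sum>j\<in>UNIV. v $ i * (if i = j then 1 else 0) * v $ j) = norm v ^ 2"
    unfolding n1 by (simp add: if_distrib if_distribR cong: if_cong)
  also have "(\<Sum>i\<in>UNIV. \<Sum>j\<in>UNIV. \<Sum>A\<in>UNIV. v $ i * (D (axis i 1)) $ A * ((D (axis j 1)) $ A * v $ j))
     = (\<Sum>A\<in>UNIV. (\<Sum>i\<in>UNIV. v $ i * (D (axis i 1)) $ A) * (\<Sum>j\<in>UNIV. (D (axis j 1)) $ A * v $ j))"
  proof -
    have "(\<Sum>A\<in>UNIV. (\<Sum>i\<in>UNIV. v $ i * (D (axis i 1)) $ A) * (\<Sum>j\<in>UNIV. (D (axis j 1)) $ A * v $ j))
      = (\<Sum>A\<in>UNIV. \<Sum>i\<in>UNIV. \<Sum>j\<in>UNIV. v $ i * (D (axis i 1)) $ A * ((D (axis j 1)) $ A * v $ j))"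
      by (simp add: sum_distrib_left sum_distrib_right) (rule sum.cong[OF refl], rule sum.swap)
    also have "\<dots> = (\<Sum>i\<in>UNIV. \<Sum>A\<in>UNIV. \<Sum>j\<in>UNIV. v $ i * (D (axis i 1)) $ A * ((D (axis j 1)) $ A * v $ j))"
      by (rule sum.swap)
    also have "\<dots> = (\<Sum>i\<in>UNIV. \<Sum>j\<in>UNIV. \<Sum>A\<in>UNIV. v $ i * (D (axis i 1)) $ A * ((D (axis j 1)) $ A * v $ j))"
      by (rule sum.cong[OF refl], rule sum.swap)
    finally show ?thesis by simp
  qed
  also have "\<dots> = norm (D v) ^ 2"
    unfolding n2 by (simp add: Dv sum_component mult.commute)
  finally show ?thesis .
qed

lemma deriv_contr:
  fixes u :: "real^'n \<Rightarrow> real^'m"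
  assumes "spacelike_graph u" "v \<noteq> 0"
  shows "norm (frechet_derivative u (at x) v) < norm v"
proof -
  have d: "u differentiable (at x)" using assms(1) unfolding spacelike_graph_def by blast
  have lin: "linear (frechet_derivative u (at x))"
    using d frechet_derivative_works has_derivative_linear by blast
  have "(\<Sum>i\<in>UNIV. \<Sum>j\<in>UNIV. v $ i * graph_metric u x i j * v $ j) > 0"
    using assms unfolding spacelike_graph_def by blast
  then have "norm v ^ 2 - norm (frechet_derivative u (at x) v) ^ 2 > 0"
    unfolding graph_metric_def quad_form[OF lin] .
  then have "norm (frechet_derivative u (at x) v) ^ 2 < norm v ^ 2" by simp
  then show ?thesis using power_less_imp_less_base by fastforce
qed

lemma lip_strict:
  fixes u :: "real^'n \<Rightarrow> real^'m"
  assumes sp: "spacelike_graph u" and ab: "a \<noteq> b"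
  shows "norm (u b - u a) < norm (b - a)"
proof -
  define D where "D = (\<lambda>y. frechet_derivative u (at y))"
  have der: "\<And>y. (u has_derivative D y) (at y)"
    using sp unfolding spacelike_graph_def D_def using frechet_derivative_works by blast
  define h where "h = (\<lambda>t::real. u (a + t *\<^sub>R (b - a)))"
  have hd: "(h has_derivative (\<lambda>s. D (a + t *\<^sub>R (b - a)) (s *\<^sub>R (b - a)))) (at t)" for t
  proof -
    have "((\<lambda>t. a + t *\<^sub>R (b - a)) has_derivative (\<lambda>s. s *\<^sub>R (b - a))) (at t)"
      by (auto intro!: derivative_eq_intros)
    from has_derivative_compose[OF this der] show ?thesis unfolding h_def .
  qed
  have cont: "continuous_on {0..1} h"
    using hd has_derivative_continuous by (metis continuous_at_imp_continuous_on)
  obtain t where "t \<in> {0<..<1}" and le: "norm (h 1 - h 0) \<le> norm (D (a + t *\<^sub>R (b - a)) ((1 - 0) *\<^sub>R (b - a)))"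
    using mvt_general[of 0 1 h, OF _ cont hd] by auto
  have "norm (D (a + t *\<^sub>R (b - a)) (b - a)) < norm (b - a)"
    unfolding D_def by (rule deriv_contr[OF sp]) (use ab in auto)
  with le show ?thesis unfolding h_def by simp
qed

lemma lip:
  fixes u :: "real^'n \<Rightarrow> real^'m"
  assumes sp: "spacelike_graph u"
  shows "norm (u b - u a) \<le> norm (b - a)"
  using lip_strict[OF sp, of a b] by (cases "a = b") auto

theorem lemma5p1:
  fixes u :: "real^'n \<Rightarrow> real^'m"
  assumes "spacelike_graph u"
    and "(0, 0) \<in> graph_of u"
  shows "((\<lambda>R. INF x\<in>UNIV - ball 0 R. ereal (norm x ^ 2 - norm (u x) ^ 2))
            \<longlongrightarrow> \<infinity>) at_top
       \<and> ((\<lambda>R. INF X\<in>graph_of u - cylinder R. ereal (lorentz_sq X))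
            \<longlongrightarrow> \<infinity>) at_top
       \<and> (\<exists>\<epsilon>>0. \<forall>x. norm (u x) \<le> chi \<epsilon> x)"
proof -
  note sp = assms(1)
  have u0: "u 0 = 0" using assms(2) unfolding graph_of_def by auto
  have contu: "continuous_on UNIV u"
    using sp unfolding spacelike_graph_def
    by (simp add: continuous_on_eq_continuous_at differentiable_imp_continuous_within)
  have "\<exists>z\<in>cball (0::real^'n) 1. \<forall>y\<in>cball 0 1. norm (u y) \<le> norm (u z)"
    by (rule continuous_attains_sup) (auto intro!: continuous_intros continuous_on_subset[OF contu])
  then obtain z where z: "z \<in> cball 0 1" and zmax: "\<And>y. y \<in> cball 0 1 \<Longrightarrow> norm (u y) \<le> norm (u z)"
    by blast
  define M where "M = norm (u z)"
  have M1: "M < 1"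
  proof (cases "z = 0")
    case True then show ?thesis using u0 M_def by simp
  next
    case False
    have "norm (u z - u 0) < norm (z - 0)" by (rule lip_strict[OF sp]) (use False in auto)
    then show ?thesis using z u0 M_def by simp
  qed
  define \<epsilon> where "\<epsilon> = 1 - M"
  have ep: "\<epsilon> > 0" using M1 \<epsilon>_def by simp
  have inball: "\<And>x. norm x \<le> 1 \<Longrightarrow> norm (u x) \<le> 1 - \<epsilon>"
    using zmax M_def \<epsilon>_def by auto
  have outer: "norm (u x) \<le> norm x - \<epsilon>" if x1: "norm x \<ge> 1" for x
  proof -
    have xnz: "x \<noteq> 0" using x1 by (metis norm_zero not_one_le_zero)
    define y where "y = (1 / norm x) *\<^sub>R x"
    have ny: "norm y = 1" proof - have "norm x \<noteq> 0" using x1 by linarith then show ?thesis unfolding y_def by simp qed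
    have xy: "x - y = (1 - 1 / norm x) *\<^sub>R x" unfolding y_def by (simp add: algebra_simps)
    have "norm (x - y) = (1 - 1 / norm x) * norm x"
    proof -
      have "1 / norm x \<le> 1" using x1 by (simp add: divide_le_eq)
      then show ?thesis unfolding xy by simp
    qed
    also have "\<dots> = norm x - 1" using xnz by (simp add: field_simps)
    finally have nxy: "norm (x - y) = norm x - 1" .
    have "norm (u x) \<le> norm (u y) + norm (u x - u y)"
      by (metis add.commute diff_add_cancel norm_triangle_ineq)
    also have "\<dots> \<le> (1 - \<epsilon>) + (norm x - 1)"
      using inball[of y] ny lip[OF sp, of x y] nxy by simp
    finally show ?thesis by simp
  qed
  have chi_ok: "\<forall>x. norm (u x) \<le> chi \<epsilon> x"
    using inball outer unfolding chi_def by auto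
  have key: "norm x ^ 2 - norm (u x) ^ 2 \<ge> 2 * \<epsilon> * R - \<epsilon> ^ 2"
    if R1: "R \<ge> 1" and xR: "norm x \<ge> R" for x R
  proof -
    have o: "norm (u x) \<le> norm x - \<epsilon>" using outer R1 xR by simp
    have "norm (u x) ^ 2 \<le> (norm x - \<epsilon>) ^ 2"
      by (rule power_mono[OF o norm_ge_zero])
    moreover have "norm x ^ 2 - (norm x - \<epsilon>) ^ 2 = 2 * \<epsilon> * norm x - \<epsilon> ^ 2"
      by (simp add: power2_eq_square algebra_simps)
    moreover have "2 * \<epsilon> * norm x \<ge> 2 * \<epsilon> * R" using xR ep by simp
    ultimately show ?thesis by linarith
  qed
  have ev: "\<forall>\<^sub>F R in at_top. R \<ge> 1 \<and> 2 * \<epsilon> * R - \<epsilon> ^ 2 > r" for r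
  proof -
    have "\<forall>\<^sub>F R in at_top. R \<ge> max 1 ((r + 1 + \<epsilon> ^ 2) / (2 * \<epsilon>))"
      by (rule eventually_ge_at_top)
    then show ?thesis
    proof (rule eventually_mono)
      fix R assume "max 1 ((r + 1 + \<epsilon> ^ 2) / (2 * \<epsilon>)) \<le> R"
      then have "R \<ge> 1" "(r + 1 + \<epsilon> ^ 2) / (2 * \<epsilon>) \<le> R" by auto
      moreover from this(2) have "r + 1 + \<epsilon> ^ 2 \<le> 2 * \<epsilon> * R"
        using ep by (simp add: divide_le_eq mult.commute)
      ultimately show "R \<ge> 1 \<and> 2 * \<epsilon> * R - \<epsilon> ^ 2 > r" by linarith
    qed
  qed
  have t1: "((\<lambda>R. INF x\<in>UNIV - ball 0 R. ereal (norm x ^ 2 - norm (u x) ^ 2)) \<longlongrightarrow> \<infinity>) at_top"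
    unfolding tendsto_PInfty
  proof
    fix r
    show "\<forall>\<^sub>F R in at_top. ereal r < (INF x\<in>UNIV - ball 0 R. ereal (norm x ^ 2 - norm (u x) ^ 2))"
      using ev[of r]
    proof (rule eventually_mono)
      fix R assume R: "R \<ge> 1 \<and> 2 * \<epsilon> * R - \<epsilon> ^ 2 > r"
      have "ereal (2 * \<epsilon> * R - \<epsilon> ^ 2) \<le> (INF x\<in>UNIV - ball 0 R. ereal (norm x ^ 2 - norm (u x) ^ 2))"
        using key R by (auto intro!: INF_greatest simp: dist_norm)
      moreover have "ereal r < ereal (2 * \<epsilon> * R - \<epsilon> ^ 2)" using R by simp
      ultimately show "ereal r < (INF x\<in>UNIV - ball 0 R. ereal (norm x ^ 2 - norm (u x) ^ 2))"
        by (rule less_le_trans[rotated])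
    qed
  qed
  have t2: "((\<lambda>R. INF X\<in>graph_of u - cylinder R. ereal (lorentz_sq X)) \<longlongrightarrow> \<infinity>) at_top"
    unfolding tendsto_PInfty
  proof
    fix r
    show "\<forall>\<^sub>F R in at_top. ereal r < (INF X\<in>graph_of u - cylinder R. ereal (lorentz_sq X))"
      using ev[of r]
    proof (rule eventually_mono)
      fix R assume R: "R \<ge> 1 \<and> 2 * \<epsilon> * R - \<epsilon> ^ 2 > r"
      have "ereal (2 * \<epsilon> * R - \<epsilon> ^ 2) \<le> (INF X\<in>graph_of u - cylinder R. ereal (lorentz_sq X))"
      proof (rule INF_greatest)
        fix X assume X: "X \<in> graph_of u - cylinder R"
        then obtain x where Xx: "X = (x, u x)" and nc: "\<not> norm x ^ 2 < R ^ 2"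
          unfolding graph_of_def cylinder_def by auto
        have "R \<le> norm x"
          using nc R by (metis norm_ge_zero not_less power_strict_mono zero_le_numeral pos2)
        then show "ereal (2 * \<epsilon> * R - \<epsilon> ^ 2) \<le> ereal (lorentz_sq X)"
          using key R unfolding Xx lorentz_sq_def by simp
      qed
      moreover have "ereal r < ereal (2 * \<epsilon> * R - \<epsilon> ^ 2)" using R by simp
      ultimately show "ereal r < (INF X\<in>graph_of u - cylinder R. ereal (lorentz_sq X))"
        by (rule less_le_trans[rotated])
    qed
  qed
  show ?thesis using t1 t2 chi_ok ep by blast
qed

end
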